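(* Let $X$ be a nonempty set and $d$ a weak almost partial metric on $X$ such that $(X,d)$ is 0-complete. Let $T:X\to X$, $G\in\{M_1,M_2\}$, and suppose $d(Tx,Ty)\le\varphi(G(x,y))$ for all $x,y\in X$, for some nearly right admissible asymptotic normal function $\varphi:[0,\infty)\to[0,\infty)$. Then there is $z\in X$ with $d(z,z)=0$ such that $\mathrm{Fix}(T;d)=\mathrm{Fix}(T)=\{z\}$, and $d(T^nx,z)\to0$ as $n\to\infty$ for each $x\in X$.
   Context: A symmetric on $X$ is a map $d:X\times X\to[0,\infty)$ with $d(x,y)=d(y,x)$. It is a weak almost partial metric if it is triangular ($d(x,z)\le d(x,y)+d(y,z)$ for all $x,y,z$) and sufficient ($d(x,y)=0$ implies $x=y$). A sequence $(x_n)$ $0d$-converges to $x$ if $d(x_n,x)\to0$; it is $0d$-Cauchy if for every $\varepsilon>0$ there is $j$ with $d(x_m,x_n)<\varepsilon$ whenever $j\le m<n$; $(X,d)$ is 0-complete if every $0d$-Cauchy sequence $0d$-converges to some point. $\mathrm{Fix}(T;d)=\{z: d(z,Tz)=0\}$, $\mathrm{Fix}(T)=\{z: Tz=z\}$. Notation: $M_1(x,y)=d(x,y)$, $H(x,y)=\max\{d(x,Tx),d(y,Ty)\}$, $M_2=\max\{M_1,H\}$. $\varphi$ is normal if $\varphi(0)=0$ and $\varphi(t)<t$ for $t>0$; asymptotic normal if normal and every sequence $(r_n)$ in $[0,\infty)$ with $r_{n+1}\le\varphi(r_n)$ for all $n$ tends to $0$; nearly right admissible if normal and there is a countable $Q\subseteq(0,\infty)$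 with $\max\{\limsup_{t\to s+}\varphi(t),\varphi(s)\}<s$ for all $s\in(0,\infty)\setminus Q$. *)

theory Defs
  imports "HOL-Analysis.Analysis" "HOL-Library.Liminf_Limsup"
begin

text \<open>All notions are relativised to a carrier set S (the set X of the paper).\<close>

definition symmetric_on :: "'a set \<Rightarrow> ('a \<Rightarrow> 'a \<Rightarrow> real) \<Rightarrow> bool" where
  "symmetric_on S d \<longleftrightarrow> (\<forall>x\<in>S. \<forall>y\<in>S. d x y \<ge> 0 \<and> d x y = d y x)"

definition weak_almost_partial_metric_on :: "'a set \<Rightarrow> ('a \<Rightarrow> 'a \<Rightarrow> real) \<Rightarrow> bool" where
  "weak_almost_partial_metric_on S d \<longleftrightarrow> symmetric_on S d
     \<and> (\<forall>x\<in>S. \<forall>y\<in>S. \<forall>z\<in>S. d x z \<le> d x y + d y z)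
     \<and> (\<forall>x\<in>S. \<forall>y\<in>S. d x y = 0 \<longrightarrow> x = y)"

definition zero_converges :: "('a \<Rightarrow> 'a \<Rightarrow> real) \<Rightarrow> (nat \<Rightarrow> 'a) \<Rightarrow> 'a \<Rightarrow> bool" where
  "zero_converges d u x \<longleftrightarrow> (\<lambda>n. d (u n) x) \<longlonglongrightarrow> 0"

definition zero_cauchy :: "('a \<Rightarrow> 'a \<Rightarrow> real) \<Rightarrow> (nat \<Rightarrow> 'a) \<Rightarrow> bool" where
  "zero_cauchy d u \<longleftrightarrow> (\<forall>e>0. \<exists>j. \<forall>m n. j \<le> m \<and> m < n \<longrightarrow> d (u m) (u n) < e)"

definition zero_complete_on :: "'a set \<Rightarrow> ('a \<Rightarrow> 'a \<Rightarrow> real) \<Rightarrow> bool" where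
  "zero_complete_on S d \<longleftrightarrow>
     (\<forall>u. (\<forall>n. u n \<in> S) \<and> zero_cauchy d u \<longrightarrow> (\<exists>x\<in>S. zero_converges d u x))"

definition Fix_d :: "'a set \<Rightarrow> ('a \<Rightarrow> 'a \<Rightarrow> real) \<Rightarrow> ('a \<Rightarrow> 'a) \<Rightarrow> 'a set" where
  "Fix_d S d T = {z\<in>S. d z (T z) = 0}"

definition Fix :: "'a set \<Rightarrow> ('a \<Rightarrow> 'a) \<Rightarrow> 'a set" where
  "Fix S T = {z\<in>S. T z = z}"

definition M1 :: "('a \<Rightarrow> 'a \<Rightarrow> real) \<Rightarrow> ('a \<Rightarrow> 'a) \<Rightarrow> 'a \<Rightarrow> 'a \<Rightarrow> real" where
  "M1 d T x y = d x y"

definition H :: "('a \<Rightarrow> 'a \<Rightarrow> real) \<Rightarrow> ('a \<Rightarrow> 'a) \<Rightarrow> 'a \<Rightarrow> 'a \<Rightarrow> real" where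
  "H d T x y = max (d x (T x)) (d y (T y))"

definition M2 :: "('a \<Rightarrow> 'a \<Rightarrow> real) \<Rightarrow> ('a \<Rightarrow> 'a) \<Rightarrow> 'a \<Rightarrow> 'a \<Rightarrow> real" where
  "M2 d T x y = max (M1 d T x y) (H d T x y)"

text \<open>phi is regarded as a function on [0,\<infinity>); only its values there matter.\<close>

definition normal_fun :: "(real \<Rightarrow> real) \<Rightarrow> bool" where
  "normal_fun \<phi> \<longleftrightarrow> (\<forall>t\<ge>0. \<phi> t \<ge> 0) \<and> \<phi> 0 = 0 \<and> (\<forall>t>0. \<phi> t < t)"

definition asymptotic_normal :: "(real \<Rightarrow> real) \<Rightarrow> bool" where
  "asymptotic_normal \<phi> \<longleftrightarrow> normal_fun \<phi> \<and>
     (\<forall>r::nat \<Rightarrow> real. (\<forall>n. r n \<ge> 0) \<and> (\<forall>n. r (Suc n) \<le> \<phi> (r n)) \<longrightarrow> r \<longlonglongrightarrow> 0)"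

definition nearly_right_admissible :: "(real \<Rightarrow> real) \<Rightarrow> bool" where
  "nearly_right_admissible \<phi> \<longleftrightarrow> normal_fun \<phi> \<and>
     (\<exists>Q. countable Q \<and> Q \<subseteq> {0<..} \<and>
        (\<forall>s. s > 0 \<and> s \<notin> Q \<longrightarrow>
           max (Limsup (at_right s) (\<lambda>t. ereal (\<phi> t))) (ereal (\<phi> s)) < ereal s))"

end

theory Submission
  imports Defs
begin

locale fpctx =
  fixes S :: "'a set" and d :: "'a \<Rightarrow> 'a \<Rightarrow> real" and T :: "'a \<Rightarrow> 'a"
    and G :: "'a \<Rightarrow> 'a \<Rightarrow> real" and \<phi> :: "real \<Rightarrow> real"
  assumes wapm: "weak_almost_partial_metric_on S d"
    and comp: "zero_complete_on S d"
    and TS: "T ` S \<subseteq> S"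
    and Gdef: "G = M1 d T \<or> G = M2 d T"
    and nra: "nearly_right_admissible \<phi>" and an: "asymptotic_normal \<phi>"
    and contr: "\<forall>x\<in>S. \<forall>y\<in>S. d (T x) (T y) \<le> \<phi> (G x y)"
begin

lemma W: "\<forall>x\<in>S. \<forall>y\<in>S. d x y \<ge> 0 \<and> d x y = d y x"
  "\<forall>x\<in>S. \<forall>y\<in>S. \<forall>z\<in>S. d x z \<le> d x y + d y z"
  "\<forall>x\<in>S. \<forall>y\<in>S. d x y = 0 \<longrightarrow> x = y"
  using wapm unfolding weak_almost_partial_metric_on_def symmetric_on_def by simp_all
lemma dnn: "x\<in>S \<Longrightarrow> y\<in>S \<Longrightarrow> 0 \<le> d x y"
  by (rule conjunct1[OF bspec[OF bspec[OF W(1)]]])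
lemma dsym: "x\<in>S \<Longrightarrow> y\<in>S \<Longrightarrow> d x y = d y x"
  by (rule conjunct2[OF bspec[OF bspec[OF W(1)]]])
lemma tri: "x\<in>S \<Longrightarrow> y\<in>S \<Longrightarrow> z\<in>S \<Longrightarrow> d x z \<le> d x y + d y z"
  by (rule bspec[OF bspec[OF bspec[OF W(2)]]])
lemma suff: "x\<in>S \<Longrightarrow> y\<in>S \<Longrightarrow> d x y = 0 \<Longrightarrow> x = y"
  by (rule mp[OF bspec[OF bspec[OF W(3)]]])
lemma normal: "normal_fun \<phi>" using an unfolding asymptotic_normal_def by auto
lemma phi0: "\<phi> 0 = 0" using normal unfolding normal_fun_def by auto
lemma phi_nn: "t \<ge> 0 \<Longrightarrow> 0 \<le> \<phi> t" using normal unfolding normal_fun_def by auto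
lemma phi_lt: "t > 0 \<Longrightarrow> \<phi> t < t" using normal unfolding normal_fun_def by auto
lemma phi_le: assumes "t \<ge> 0" shows "\<phi> t \<le> t"
proof (cases "t = 0")
  case True then show ?thesis using phi0 by simp
next
  case False then have "t > 0" using assms by simp
  then show ?thesis using phi_lt[of t] by linarith
qed
lemma fix0: assumes "0 \<le> b" "b \<le> \<phi> b" shows "b = 0"
proof (rule ccontr)
  assume "b \<noteq> 0" then have "b > 0" using assms by simp
  then have "\<phi> b < b" by (rule phi_lt)
  then show False using assms by linarith
qed
lemma TS': "x\<in>S \<Longrightarrow> T x \<in> S" using TS by auto
lemma contr': "x\<in>S \<Longrightarrow> y\<in>S \<Longrightarrow> d (T x) (T y) \<le> \<phi> (G x y)" using contr by auto
lemma G_cases: "G x y = d x y \<or> G x y = max (d x y) (max (d x (T x)) (d y (T y)))"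
  using Gdef unfolding M1_def M2_def H_def by auto
lemma G_ge: "d x y \<le> G x y" using G_cases[of x y] by auto
lemma G_le: "G x y \<le> max (d x y) (max (d x (T x)) (d y (T y)))" using G_cases[of x y] by auto

lemma orbS: "x\<in>S \<Longrightarrow> (T^^n) x \<in> S" by (induction n) (auto simp: TS')

lemma r_step:
  assumes x: "x\<in>S"
  shows "d ((T^^Suc n) x) ((T^^Suc (Suc n)) x) \<le> \<phi> (d ((T^^n) x) ((T^^Suc n) x))"
proof -
  define a where "a = (T^^n) x"
  have aS: "a \<in> S" using orbS[OF x] a_def by simp
  have e: "(T^^Suc n) x = T a" "(T^^Suc(Suc n)) x = T (T a)" by (simp_all add: a_def)
  have TaS: "T a \<in> S" using TS'[OF aS] .
  have TTaS: "T (T a) \<in> S" using TS'[OF TaS] .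
  have c: "d (T a) (T (T a)) \<le> \<phi> (G a (T a))" using contr'[OF aS TaS] .
  have p0: "0 \<le> d a (T a)" "0 \<le> d (T a) (T (T a))" using dnn[OF aS TaS] dnn[OF TaS TTaS] .
  have "d (T a) (T (T a)) \<le> \<phi> (d a (T a))"
    using G_cases[of a "T a"]
  proof
    assume "G a (T a) = d a (T a)" then show ?thesis using c by simp
  next
    assume h: "G a (T a) = max (d a (T a)) (max (d a (T a)) (d (T a) (T (T a))))"
    show ?thesis
    proof (cases "d (T a) (T (T a)) \<le> d a (T a)")
      case True then show ?thesis using c h by simp
    next
      case False
      then have "d (T a) (T (T a)) \<le> \<phi> (d (T a) (T (T a)))" using c h by simp
      then have "d (T a) (T (T a)) = 0" using fix0 p0 by blast
      then show ?thesis using phi_nn p0 by simp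
    qed
  qed
  then show ?thesis using e a_def by simp
qed

lemma r_dec: "x\<in>S \<Longrightarrow> m \<le> n \<Longrightarrow> d ((T^^n) x) ((T^^Suc n) x) \<le> d ((T^^m) x) ((T^^Suc m) x)"
proof -
  assume x: "x \<in> S" and mn: "m \<le> n"
  have "decseq (\<lambda>n. d ((T^^n) x) ((T^^Suc n) x))"
  proof (rule decseq_SucI)
    fix n
    have "0 \<le> d ((T^^n) x) ((T^^Suc n) x)" using dnn[OF orbS[OF x] orbS[OF x]] .
    then have "\<phi> (d ((T^^n) x) ((T^^Suc n) x)) \<le> d ((T^^n) x) ((T^^Suc n) x)" by (rule phi_le)
    then show "d ((T^^Suc n) x) ((T^^Suc (Suc n)) x) \<le> d ((T^^n) x) ((T^^Suc n) x)"
      using r_step[OF x, of n] by linarith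
  qed
  then show ?thesis using mn by (simp add: decseq_def)
qed

lemma r_lim: assumes x: "x\<in>S" shows "(\<lambda>n. d ((T^^n) x) ((T^^Suc n) x)) \<longlonglongrightarrow> 0"
proof -
  have A: "\<forall>r::nat \<Rightarrow> real. (\<forall>n. r n \<ge> 0) \<and> (\<forall>n. r (Suc n) \<le> \<phi> (r n)) \<longrightarrow> r \<longlonglongrightarrow> 0"
    using an unfolding asymptotic_normal_def by (rule conjunct2)
  have "(\<forall>n. d ((T^^n) x) ((T^^Suc n) x) \<ge> 0) \<and> (\<forall>n. d ((T^^Suc n) x) ((T^^Suc (Suc n)) x) \<le> \<phi> (d ((T^^n) x) ((T^^Suc n) x)))"
    by (intro conjI allI r_step[OF x] dnn[OF orbS[OF x] orbS[OF x]])
  then show ?thesis using mp[OF spec[OF A, of "\<lambda>n. d ((T^^n) x) ((T^^Suc n) x)"]] by simp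
qed

lemma orbit_cauchy:
  assumes x: "x\<in>S"
  shows "zero_cauchy d (\<lambda>n. (T^^n) x)"
  unfolding zero_cauchy_def
proof (intro allI impI)
  fix \<epsilon> :: real assume ep: "\<epsilon> > 0"
  have ex: "\<exists>Q. countable Q \<and> Q \<subseteq> {0<..} \<and>
        (\<forall>s. s > 0 \<and> s \<notin> Q \<longrightarrow>
           max (Limsup (at_right s) (\<lambda>t. ereal (\<phi> t))) (ereal (\<phi> s)) < ereal s)"
    using nra unfolding nearly_right_admissible_def by (rule conjunct2)
  then obtain Q where Q: "countable Q" and
    QL: "\<forall>s. s > 0 \<and> s \<notin> Q \<longrightarrow>
           max (Limsup (at_right s) (\<lambda>t. ereal (\<phi> t))) (ereal (\<phi> s)) < ereal s"
    by (elim exE conjE)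
  have "uncountable {0<..<\<epsilon>/2}" using uncountable_open_interval ep by simp
  then have "uncountable ({0<..<\<epsilon>/2} - Q)" using uncountable_minus_countable Q by blast
  then have "{0<..<\<epsilon>/2} - Q \<noteq> {}" using countable_empty by metis
  then obtain s where s: "s \<in> {0<..<\<epsilon>/2}" "s \<notin> Q" by blast
  have s0: "s > 0" using s(1) by simp
  have "max (Limsup (at_right s) (\<lambda>t. ereal (\<phi> t))) (ereal (\<phi> s)) < ereal s"
    using QL s0 s(2) by blast
  then have "Limsup (at_right s) (\<lambda>t. ereal (\<phi> t)) < ereal s" by (rule max.strict_boundedE)
  then have "eventually (\<lambda>t. ereal (\<phi> t) < ereal s) (at_right s)" by (rule Limsup_lessD)
  then obtain b where b0: "b > s" and b1: "\<forall>t>s. t < b \<longrightarrow> ereal (\<phi> t) < ereal s"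
    unfolding eventually_at_right_field by blast
  have b: "b > s" "\<And>t. t > s \<Longrightarrow> t < b \<Longrightarrow> \<phi> t < s" using b0 b1 by auto
  define \<eta> where "\<eta> = min (b - s) s"
  have eta: "\<eta> > 0" "\<eta> \<le> b - s" "\<eta> \<le> s" using b0 s0 by (auto simp: \<eta>_def)
  have phis: "\<phi> s < s" using phi_lt s0 by blast
  have key: "\<And>g. 0 \<le> g \<Longrightarrow> g < s + \<eta> \<Longrightarrow> \<phi> g < s"
  proof -
    fix g :: real assume g: "0 \<le> g" "g < s + \<eta>"
    show "\<phi> g < s"
    proof (cases "g < s")
      case True then show ?thesis using phi_le[OF g(1)] by simp
    next
      case False
      then show ?thesis using phis b(2)[of g] g eta by (cases "g = s") auto
    qed
  qed
  let ?u = "\<lambda>n. (T^^n) x"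
  let ?r = "\<lambda>n. d ((T^^n) x) ((T^^Suc n) x)"
  obtain N where N: "\<And>n. n \<ge> N \<Longrightarrow> ?r n < \<eta>"
    using order_tendstoD(2)[OF r_lim[OF x] eta(1)] unfolding eventually_sequentially by blast
  have inv: "\<And>m k. m \<ge> N \<Longrightarrow> d (?u m) (?u (m + Suc k)) < s + \<eta>"
  proof -
    fix m k assume m: "m \<ge> N"
    show "d (?u m) (?u (m + Suc k)) < s + \<eta>"
    proof (induction k)
      case 0 have "?r m < \<eta>" using N[OF m] .
        then show ?case using s0 by simp
    next
      case (Suc k)
      define n where "n = m + Suc k"
      have IH: "d (?u m) (?u n) < s + \<eta>" using Suc n_def by simp
      have S1: "?u m \<in> S" "?u n \<in> S" "?u (Suc m) \<in> S" "?u (Suc n) \<in> S" by (rule orbS[OF x])+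
      have t1: "d (?u m) (?u (Suc n)) \<le> ?r m + d (?u (Suc m)) (?u (Suc n))"
        using tri[OF S1(1) S1(3) S1(4)] .
      have "d (?u (Suc m)) (?u (Suc n)) = d (T (?u m)) (T (?u n))" by simp
      also have "\<dots> \<le> \<phi> (G (?u m) (?u n))" using contr'[OF S1(1) S1(2)] .
      also have "\<dots> < s"
      proof (rule key)
        show "0 \<le> G (?u m) (?u n)" using G_ge[of "?u m" "?u n"] dnn[OF S1(1) S1(2)] by linarith
        have rn: "?r n \<le> ?r m" using r_dec[OF x, of m n] n_def by simp
        have "G (?u m) (?u n) \<le> max (d (?u m) (?u n)) (max (?r m) (?r n))"
          using G_le[of "?u m" "?u n"] by simp
        also have "\<dots> < s + \<eta>" using IH rn N[OF m] eta by auto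
        finally show "G (?u m) (?u n) < s + \<eta>" .
      qed
      finally have "d (?u (Suc m)) (?u (Suc n)) < s" .
      then have "d (?u m) (?u (Suc n)) < s + \<eta>" using t1 N[OF m] by simp
      then show ?case using n_def by simp
    qed
  qed
  show "\<exists>j. \<forall>m n. j \<le> m \<and> m < n \<longrightarrow> d (?u m) (?u n) < \<epsilon>"
  proof (intro exI allI impI)
    fix m n assume mn: "N \<le> m \<and> m < n"
    obtain k where k: "n = Suc (m + k)" using less_imp_Suc_add mn by blast
    have nk: "n = m + Suc k" using k by simp
    have m: "N \<le> m" using mn by simp
    have "d (?u m) (?u (m + Suc k)) < s + \<eta>" using inv[OF m] .
    then have "d (?u m) (?u n) < s + \<eta>" using nk by simp
    moreover have "s < \<epsilon>/2" using s(1) by simp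
    ultimately show "d (?u m) (?u n) < \<epsilon>" using eta(3) by linarith
  qed
qed


lemma limit_fixed:
  assumes x: "x\<in>S" and z: "z\<in>S" and lim: "zero_converges d (\<lambda>n. (T^^n) x) z"
  shows "T z = z"
proof -
  let ?u = "\<lambda>n. (T^^n) x"
  let ?r = "\<lambda>n. d ((T^^n) x) ((T^^Suc n) x)"
  define a where "a = d z (T z)"
  have Tz: "T z \<in> S" using TS' z by auto
  have a0: "a \<ge> 0" using dnn z Tz a_def by auto
  have L: "(\<lambda>n. d (?u n) z) \<longlonglongrightarrow> 0" using lim unfolding zero_converges_def by simp
  have "a = 0"
  proof (rule ccontr)
    assume "a \<noteq> 0" then have ap: "a > 0" using a0 by simp
    have pa: "\<phi> a < a" "0 \<le> \<phi> a" using phi_lt[OF ap] phi_nn a0 by auto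
    define e where "e = min a ((a - \<phi> a)/2)"
    have e: "e > 0" "e \<le> a" "2 * e \<le> a - \<phi> a" using ap pa by (auto simp: e_def)
    have ev1: "eventually (\<lambda>n. d (?u n) z < e) sequentially"
      using order_tendstoD(2)[OF L e(1)] .
    have L2: "(\<lambda>n. d (?u (Suc n)) z) \<longlonglongrightarrow> 0" using LIMSEQ_Suc[OF L] .
    have ev2: "eventually (\<lambda>n. d (?u (Suc n)) z < e) sequentially"
      using order_tendstoD(2)[OF L2 e(1)] .
    have ev3: "eventually (\<lambda>n. ?r n < e) sequentially"
      using order_tendstoD(2)[OF r_lim[OF x] e(1)] .
    have ev: "eventually (\<lambda>n. d (?u n) z < e \<and> d (?u (Suc n)) z < e \<and> ?r n < e) sequentially"
      using eventually_conj[OF ev1 eventually_conj[OF ev2 ev3]] .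
    then obtain n where n: "d (?u n) z < e" "d (?u (Suc n)) z < e" "?r n < e"
      using eventually_sequentially by auto
    have S1: "?u n \<in> S" "?u (Suc n) \<in> S" by (rule orbS[OF x])+
    have "a \<le> d z (?u (Suc n)) + d (?u (Suc n)) (T z)" using tri[OF z S1(2) Tz] a_def by simp
    also have "d z (?u (Suc n)) = d (?u (Suc n)) z" using dsym[OF z S1(2)] .
    also have "d (?u (Suc n)) (T z) = d (T (?u n)) (T z)" by simp
    also have "\<dots> \<le> \<phi> (G (?u n) z)" using contr'[OF S1(1) z] .
    finally have A: "a \<le> d (?u (Suc n)) z + \<phi> (G (?u n) z)" by simp
    have dn0: "0 \<le> d (?u n) z" using dnn[OF S1(1) z] .
    show False using G_cases[of "?u n" z]
    proof
      assume "G (?u n) z = d (?u n) z"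
      then have "\<phi> (G (?u n) z) \<le> d (?u n) z" using phi_le[OF dn0] by simp
      then show False using A n e pa by linarith
    next
      assume h: "G (?u n) z = max (d (?u n) z) (max (d (?u n) (T (?u n))) (d z (T z)))"
      have "d (?u n) (T (?u n)) = ?r n" by simp
      then have "G (?u n) z = a" using h n e a_def by auto
      then have "\<phi> (G (?u n) z) = \<phi> a" by simp
      then show False using A n e pa by linarith
    qed
  qed
  then have "d z (T z) = 0" using a_def by simp
  then have "z = T z" by (rule suff[OF z Tz])
  then show ?thesis by simp
qed

lemma exists_limit: assumes x: "x\<in>S" shows "\<exists>z\<in>S. zero_converges d (\<lambda>n. (T^^n) x) z"
proof -
  have A: "\<forall>u. (\<forall>n. u n \<in> S) \<and> zero_cauchy d u \<longrightarrow> (\<exists>x\<in>S. zero_converges d u x)"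
    using comp unfolding zero_complete_on_def .
  have "(\<forall>n. (T^^n) x \<in> S) \<and> zero_cauchy d (\<lambda>n. (T^^n) x)"
    by (intro conjI allI orbS[OF x] orbit_cauchy[OF x])
  then show ?thesis using mp[OF spec[OF A, of "\<lambda>n. (T^^n) x"]] by simp
qed

lemma dzz: assumes z: "z\<in>S" and f: "T z = z" shows "d z z = 0"
proof -
  have "d (T z) (T z) \<le> \<phi> (G z z)" using contr'[OF z z] .
  then have "d z z \<le> \<phi> (G z z)" using f by simp
  moreover have "G z z = d z z" using G_cases[of z z] f by auto
  ultimately have "d z z \<le> \<phi> (d z z)" by simp
  then show ?thesis using fix0 dnn[OF z z] by blast
qed

lemma uniq: assumes "w\<in>S" "z\<in>S" "T w = w" "T z = z" shows "w = z"
proof -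
  have "d (T w) (T z) \<le> \<phi> (G w z)" using contr'[OF assms(1,2)] .
  then have c: "d w z \<le> \<phi> (G w z)" using assms(3,4) by simp
  have "d w (T w) = 0" "d z (T z) = 0" using dzz[OF assms(1,3)] dzz[OF assms(2,4)] assms(3,4) by simp_all
  moreover have "0 \<le> d w z" using dnn[OF assms(1,2)] .
  ultimately have "G w z = d w z" using G_cases[of w z] by auto
  then have "d w z \<le> \<phi> (d w z)" using c by simp
  then have "d w z = 0" using fix0 dnn[OF assms(1,2)] by blast
  then show ?thesis by (rule suff[OF assms(1,2)])
qed

end

theorem theorem5:
  fixes S :: "'a set" and d :: "'a \<Rightarrow> 'a \<Rightarrow> real" and T :: "'a \<Rightarrow> 'a"
    and G :: "'a \<Rightarrow> 'a \<Rightarrow> real" and \<phi> :: "real \<Rightarrow> real"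
  assumes "S \<noteq> {}"
    and "weak_almost_partial_metric_on S d"
    and "zero_complete_on S d"
    and "T ` S \<subseteq> S"
    and "G = M1 d T \<or> G = M2 d T"
    and "nearly_right_admissible \<phi>" and "asymptotic_normal \<phi>"
    and "\<forall>x\<in>S. \<forall>y\<in>S. d (T x) (T y) \<le> \<phi> (G x y)"
  shows "\<exists>z\<in>S. d z z = 0 \<and> Fix_d S d T = {z} \<and> Fix S T = {z} \<and>
           (\<forall>x\<in>S. (\<lambda>n. d ((T ^^ n) x) z) \<longlonglongrightarrow> 0)"
proof -
  interpret F: fpctx S d T G \<phi> using assms(2-8) by unfold_locales
  obtain x0 where x0: "x0 \<in> S" using assms(1) by auto
  obtain z where z: "z \<in> S" "zero_converges d (\<lambda>n. (T^^n) x0) z"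
    using F.exists_limit[OF x0] by blast
  have fz: "T z = z" using F.limit_fixed[OF x0 z] .
  have fd: "Fix_d S d T = {z}"
  proof -
    have "\<And>w. w \<in> S \<Longrightarrow> d w (T w) = 0 \<longleftrightarrow> w = z"
    proof
      fix w assume w: "w \<in> S" "d w (T w) = 0"
      then have "w = T w" using F.suff F.TS' by blast
      then show "w = z" using F.uniq[OF w(1) z(1)] fz by simp
    next
      fix w assume "w = z" then show "d w (T w) = 0" using F.dzz z fz by simp
    qed
    then show ?thesis unfolding Fix_d_def using z by blast
  qed
  have ff: "Fix S T = {z}"
  proof -
    have "\<And>w. w \<in> S \<Longrightarrow> T w = w \<longleftrightarrow> w = z"
      using F.uniq[OF _ z(1) _ fz] fz by blast
    then show ?thesis unfolding Fix_def using z by blast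
  qed
  have conv: "\<forall>x\<in>S. (\<lambda>n. d ((T ^^ n) x) z) \<longlonglongrightarrow> 0"
  proof
    fix x assume x: "x \<in> S"
    obtain z' where z': "z' \<in> S" "zero_converges d (\<lambda>n. (T^^n) x) z'"
      using F.exists_limit[OF x] by blast
    have "T z' = z'" using F.limit_fixed[OF x z'] .
    then have "z' = z" using F.uniq[OF z'(1) z(1) _ fz] by blast
    then show "(\<lambda>n. d ((T ^^ n) x) z) \<longlonglongrightarrow> 0" using z' unfolding zero_converges_def by simp
  qed
  have "d z z = 0" using F.dzz[OF z(1) fz] .
  then show ?thesis using z(1) fd ff conv by blast
qed

end
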